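(* Fix $L_0>0$. Uniformly over parameters $\mathbf x=(x^1,\dots,x^k)$ with $\|x^b\|\le L_0$ for all $b$, and for all $a,c\in[k]$ and $v\in\mathbb R^d$, as $\lambda\to\infty$, $$P_a^c=\bar\pi_c(a)+O(1/\lambda),\qquad Q_a^{c,v}=O(\|v\|/\lambda),$$ with implicit constants depending only on $k$ and $L_0$.
   Context: Let $\mu_1,\dots,\mu_k\in\mathbb R^d$ be unit vectors, $\lambda>0$, $Z_\lambda\sim\mathcal N(0,I_d/\lambda)$ and $Y_c=\mu_c+Z_\lambda$. For $\mathbf x=(x^1,\dots,x^k)\in(\mathbb R^d)^k$ define $\pi_{Y}(a)=\exp(x^a\cdot Y)/\sum_b\exp(x^b\cdot Y)$, $m_{ac}=x^a\cdot\mu_c$, $\bar\pi_c(a)=e^{m_{ac}}/\sum_be^{m_{bc}}$, $P_a^c=\mathbb E[\pi_{Y_c}(a)]$ and $Q_a^{c,v}=\mathbb E[\langle Z_\lambda,v\rangle\pi_{Y_c}(a)]$. *)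

theory Defs
  imports "HOL-Probability.Probability"
begin

text \<open>Vectors in R^d are represented as functions nat => real, only coordinates i < d matter.
  The k vectors mu_1..mu_k and x^1..x^k are indexed by c < k (0-based).\<close>

definition dinner :: "nat \<Rightarrow> (nat \<Rightarrow> real) \<Rightarrow> (nat \<Rightarrow> real) \<Rightarrow> real" where
  "dinner d u w = (\<Sum>i<d. u i * w i)"

definition dnorm :: "nat \<Rightarrow> (nat \<Rightarrow> real) \<Rightarrow> real" where
  "dnorm d u = sqrt (dinner d u u)"

text \<open>Law of Z_lambda ~ N(0, I_d / lambda): product of d centred normals with variance 1/lambda.\<close>
definition gauss :: "nat \<Rightarrow> real \<Rightarrow> (nat \<Rightarrow> real) measure" where
  "gauss d lam = PiM {..<d} (\<lambda>_. density lborel (normal_density 0 (1 / sqrt lam)))"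

definition softmax_Y :: "nat \<Rightarrow> nat \<Rightarrow> (nat \<Rightarrow> nat \<Rightarrow> real) \<Rightarrow> (nat \<Rightarrow> real) \<Rightarrow> nat \<Rightarrow> real" where
  "softmax_Y d k x y a = exp (dinner d (x a) y) / (\<Sum>b<k. exp (dinner d (x b) y))"

definition pibar :: "nat \<Rightarrow> nat \<Rightarrow> (nat \<Rightarrow> nat \<Rightarrow> real) \<Rightarrow> (nat \<Rightarrow> nat \<Rightarrow> real) \<Rightarrow> nat \<Rightarrow> nat \<Rightarrow> real" where
  "pibar d k x mu c a = exp (dinner d (x a) (mu c)) / (\<Sum>b<k. exp (dinner d (x b) (mu c)))"

definition Pac :: "nat \<Rightarrow> nat \<Rightarrow> real \<Rightarrow> (nat \<Rightarrow> nat \<Rightarrow> real) \<Rightarrow> (nat \<Rightarrow> nat \<Rightarrow> real) \<Rightarrow> nat \<Rightarrow> nat \<Rightarrow> real" where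
  "Pac d k lam x mu c a =
     (\<integral>z. softmax_Y d k x (\<lambda>i. mu c i + z i) a \<partial>gauss d lam)"

definition Qacv :: "nat \<Rightarrow> nat \<Rightarrow> real \<Rightarrow> (nat \<Rightarrow> nat \<Rightarrow> real) \<Rightarrow> (nat \<Rightarrow> nat \<Rightarrow> real) \<Rightarrow> nat \<Rightarrow> nat \<Rightarrow> (nat \<Rightarrow> real) \<Rightarrow> real" where
  "Qacv d k lam x mu c a v =
     (\<integral>z. dinner d z v * softmax_Y d k x (\<lambda>i. mu c i + z i) a \<partial>gauss d lam)"

end

theory Submission
  imports Defs
begin


lemma bound_aux:
  fixes p t :: "nat \<Rightarrow> real" and q :: real
  assumes p0: "\<And>b. b < k \<Longrightarrow> 0 \<le> p b" and p1: "(\<Sum>b<k. p b) = 1"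
    and q0: "0 \<le> q" and q1: "q \<le> 1" and a: "a < k"
  shows "\<bar>q * (t a - (\<Sum>b<k. p b * t b))\<bar> \<le> 2 * (\<Sum>b<k. \<bar>t b\<bar>)"
    and "\<bar>q * ((t a - (\<Sum>b<k. p b * t b))\<^sup>2 - ((\<Sum>b<k. p b * (t b)\<^sup>2) - (\<Sum>b<k. p b * t b)\<^sup>2))\<bar>
          \<le> (5 * real k + 1) * (\<Sum>b<k. (t b)\<^sup>2)"
proof -
  define m where "m = (\<Sum>b<k. \<bar>t b\<bar>)"
  define A where "A = (\<Sum>b<k. p b * t b)"
  define B where "B = (\<Sum>b<k. p b * (t b)\<^sup>2)"
  define S where "S = (\<Sum>b<k. (t b)\<^sup>2)"
  have pl1: "p b \<le> 1" if "b < k" for b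
  proof -
    have "p b \<le> (\<Sum>b<k. p b)"
      using that p0 by (intro member_le_sum) auto
    then show ?thesis using p1 by simp
  qed
  have ta: "\<bar>t a\<bar> \<le> m" unfolding m_def using a by (intro member_le_sum) auto
  have "\<bar>A\<bar> \<le> (\<Sum>b<k. \<bar>p b * t b\<bar>)" unfolding A_def by (rule sum_abs)
  also have "\<dots> \<le> m" unfolding m_def
    by (intro sum_mono) (use p0 pl1 in \<open>auto simp: abs_mult intro!: mult_left_le_one_le\<close>)
  finally have Am: "\<bar>A\<bar> \<le> m" .
  have B0: "0 \<le> B" unfolding B_def using p0 by (intro sum_nonneg) auto
  have BS: "B \<le> S" unfolding B_def S_def
    by (intro sum_mono) (use p0 pl1 in \<open>auto intro!: mult_left_le_one_le\<close>)
  have mS: "m\<^sup>2 \<le> real k * S"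
    using sum_squared_le_sum_of_squares[of "\<lambda>b. \<bar>t b\<bar>" "{..<k}"] unfolding m_def S_def
    by (simp add: mult.commute)
  have m0: "0 \<le> m" unfolding m_def by (intro sum_nonneg) auto
  have S0: "0 \<le> S" unfolding S_def by (intro sum_nonneg) auto
  have "\<bar>q * (t a - A)\<bar> \<le> \<bar>t a - A\<bar>" using q0 q1 by (simp add: abs_mult mult_left_le_one_le)
  also have "\<dots> \<le> 2 * m" using ta Am by linarith
  finally show "\<bar>q * (t a - (\<Sum>b<k. p b * t b))\<bar> \<le> 2 * (\<Sum>b<k. \<bar>t b\<bar>)"
    unfolding A_def m_def .
  have "\<bar>t a - A\<bar> \<le> 2 * m" using ta Am by linarith
  hence s1: "(t a - A)\<^sup>2 \<le> 4 * m\<^sup>2"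
    by (metis abs_ge_zero power2_abs power_mono power_mult_distrib real_sqrt_four real_sqrt_pow2 zero_le_numeral power2_eq_square)
  have s2: "A\<^sup>2 \<le> m\<^sup>2" using Am by (metis abs_ge_zero power2_abs power_mono)
  have "\<bar>q * ((t a - A)\<^sup>2 - (B - A\<^sup>2))\<bar> \<le> \<bar>(t a - A)\<^sup>2 - (B - A\<^sup>2)\<bar>"
    using q0 q1 by (simp add: abs_mult mult_left_le_one_le)
  also have "\<dots> \<le> (t a - A)\<^sup>2 + A\<^sup>2 + B" using B0 by (simp add: abs_le_iff)
  also have "\<dots> \<le> 5 * m\<^sup>2 + S" using s1 s2 BS by linarith
  also have "\<dots> \<le> (5 * real k + 1) * S" using mS by (simp add: algebra_simps)
  finally show "\<bar>q * ((t a - (\<Sum>b<k. p b * t b))\<^sup>2 - ((\<Sum>b<k. p b * (t b)\<^sup>2) - (\<Sum>b<k. p b * t b)\<^sup>2))\<bar>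
          \<le> (5 * real k + 1) * (\<Sum>b<k. (t b)\<^sup>2)" unfolding A_def B_def S_def .
qed



definition smx :: "nat \<Rightarrow> (nat \<Rightarrow> real) \<Rightarrow> nat \<Rightarrow> real" where
  "smx k s a = exp (s a) / (\<Sum>b<k. exp (s b))"

lemma smx_pos: "0 < (k::nat) \<Longrightarrow> (\<Sum>b<k. exp (s b :: real)) > 0"
  by (auto intro!: sum_pos)

lemma smx_props:
  assumes "0 < k"
  shows "\<And>b. 0 \<le> smx k s b" "(\<Sum>b<k. smx k s b) = 1" "\<And>b. b < k \<Longrightarrow> smx k s b \<le> 1"
proof -
  have E: "(\<Sum>b<k. exp (s b)) > 0" using smx_pos[OF assms] .
  show "\<And>b. 0 \<le> smx k s b" unfolding smx_def using E by auto
  show "(\<Sum>b<k. smx k s b) = 1" unfolding smx_def using E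
    by (simp add: sum_divide_distrib[symmetric])
  fix b assume "b < k"
  have "exp (s b) \<le> (\<Sum>b<k. exp (s b))" using \<open>b<k\<close> by (intro member_le_sum) auto
  then show "smx k s b \<le> 1" unfolding smx_def using E by simp
qed

context
  fixes k :: nat and s t :: "nat \<Rightarrow> real" and a :: nat
  assumes k: "0 < k"
begin

definition "EE r = (\<Sum>b<k. exp (s b + r * t b))"
definition "E1 r = (\<Sum>b<k. exp (s b + r * t b) * t b)"
definition "E2 r = (\<Sum>b<k. exp (s b + r * t b) * (t b)\<^sup>2)"
definition "ph r = exp (s a + r * t a) / EE r"
definition "ph1 r = ph r * (t a - E1 r / EE r)"
definition "ph2 r = ph r * ((t a - E1 r / EE r)\<^sup>2 - (E2 r / EE r - (E1 r / EE r)\<^sup>2))"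

lemma EE_pos: "EE r > 0" unfolding EE_def using k by (intro sum_pos) auto

lemma d_EE: "(EE has_real_derivative E1 r) (at r)"
  unfolding EE_def E1_def by (auto intro!: derivative_eq_intros)
lemma d_E1: "(E1 has_real_derivative E2 r) (at r)"
  unfolding E2_def E1_def by (auto intro!: derivative_eq_intros simp: power2_eq_square mult.assoc)

lemma d_ph: "(ph has_real_derivative ph1 r) (at r)"
proof -
  have "((\<lambda>r. exp (s a + r * t a) / EE r) has_real_derivative
     ((exp (s a + r * t a) * t a) * EE r - exp (s a + r * t a) * E1 r) / (EE r * EE r)) (at r)"
    using EE_pos[of r] by (auto intro!: derivative_eq_intros d_EE)
  moreover have "((exp (s a + r * t a) * t a) * EE r - exp (s a + r * t a) * E1 r) / (EE r * EE r) = ph1 r"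
    unfolding ph1_def ph_def using EE_pos[of r] by (simp add: field_simps)
  ultimately show ?thesis unfolding ph_def[abs_def] by simp
qed

lemma d_ph1: "(ph1 has_real_derivative ph2 r) (at r)"
proof -
  have "((\<lambda>r. ph r * (t a - E1 r / EE r)) has_real_derivative
     ph1 r * (t a - E1 r / EE r) + ph r * (- ((E2 r * EE r - E1 r * E1 r) / (EE r * EE r)))) (at r)"
    using EE_pos[of r] by (auto intro!: derivative_eq_intros d_EE d_E1 d_ph)
  moreover have "ph1 r * (t a - E1 r / EE r) + ph r * (- ((E2 r * EE r - E1 r * E1 r) / (EE r * EE r))) = ph2 r"
    unfolding ph1_def ph2_def using EE_pos[of r] by (simp add: field_simps power2_eq_square)
  ultimately show ?thesis unfolding ph1_def[abs_def] by simp
qed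

lemma ph_eq: "ph r = smx k (\<lambda>b. s b + r * t b) a"
  unfolding ph_def smx_def EE_def ..

lemma ratio_eq: "E1 r / EE r = (\<Sum>b<k. smx k (\<lambda>b. s b + r * t b) b * t b)"
  "E2 r / EE r = (\<Sum>b<k. smx k (\<lambda>b. s b + r * t b) b * (t b)\<^sup>2)"
  unfolding smx_def E1_def E2_def EE_def by (simp_all add: sum_divide_distrib)

lemma ph1_bound: "a < k \<Longrightarrow> \<bar>ph1 r\<bar> \<le> 2 * (\<Sum>b<k. \<bar>t b\<bar>)"
  unfolding ph1_def ratio_eq ph_eq
  by (rule bound_aux(1)) (use smx_props[OF k] in auto)

lemma ph2_bound: "a < k \<Longrightarrow> \<bar>ph2 r\<bar> \<le> (5 * real k + 1) * (\<Sum>b<k. (t b)\<^sup>2)"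
  unfolding ph2_def ratio_eq ph_eq
  by (rule bound_aux(2)) (use smx_props[OF k] in auto)

lemma lip: "a < k \<Longrightarrow> \<bar>ph 1 - ph 0\<bar> \<le> 2 * (\<Sum>b<k. \<bar>t b\<bar>)"
proof -
  assume a: "a < k"
  obtain z where "ph 1 - ph 0 = (1 - 0) * ph1 z"
    using MVT2[of 0 1 ph ph1] d_ph by auto
  then show ?thesis using ph1_bound[OF a, of z] by simp
qed

lemma taylor2: "a < k \<Longrightarrow> \<bar>ph 1 - ph 0 - ph1 0\<bar> \<le> (5 * real k + 1) / 2 * (\<Sum>b<k. (t b)\<^sup>2)"
proof -
  assume a: "a < k"
  define diff where "diff = (\<lambda>m::nat. if m = 0 then ph else if m = 1 then ph1 else ph2)"
  have "\<exists>z>0. z < 1 \<and> ph 1 = (\<Sum>m<2. diff m 0 / fact m * 1 ^ m) + diff 2 z / fact 2 * 1 ^ 2"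
    by (rule Maclaurin[of 1 2 diff ph]) (auto simp: diff_def less_2_cases_iff d_ph d_ph1)
  then obtain z where "ph 1 = ph 0 + ph1 0 + ph2 z / 2"
    by (auto simp: diff_def numeral_2_eq_2)
  then show ?thesis using ph2_bound[OF a, of z] by simp
qed

end


lemma smx_lip:
  assumes "0 < k" "a < k"
  shows "\<bar>smx k (\<lambda>b. s b + t b) a - smx k s a\<bar> \<le> 2 * (\<Sum>b<k. \<bar>t b\<bar>)"
  using lip[OF assms(1) assms(2), of s t] unfolding ph_eq[OF assms(1)] by simp

lemma smx_taylor:
  assumes "0 < k" "a < k"
  shows "\<bar>smx k (\<lambda>b. s b + t b) a - smx k s a - smx k s a * (t a - (\<Sum>b<k. smx k s b * t b))\<bar>
     \<le> (5 * real k + 1) / 2 * (\<Sum>b<k. (t b)\<^sup>2)"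
  using taylor2[OF assms(1) assms(2), of s t] unfolding ph1_def[OF assms(1)] ratio_eq[OF assms(1)] ph_eq[OF assms(1)]
  by simp



lemma G_facts:
  fixes \<sigma> :: real assumes s: "0 < \<sigma>"
  defines "G \<equiv> density lborel (normal_density 0 \<sigma>)"
  shows "prob_space G"
    and "integrable G (\<lambda>x. x)" "integral\<^sup>L G (\<lambda>x. x) = 0"
    and "integrable G (\<lambda>x. x * x)" "integral\<^sup>L G (\<lambda>x. x * x) = \<sigma>\<^sup>2"
proof -
  show "prob_space G" unfolding G_def by (rule prob_space_normal_density[OF s])
  have nn: "AE x in lborel. 0 \<le> normal_density 0 \<sigma> x" by (simp add: normal_density_nonneg)
  show "integrable G (\<lambda>x. x)" unfolding G_def
    by (subst integrable_density) (use nn integrable_normal_moment_nz_1[OF s, of 0] in auto)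
  show "integral\<^sup>L G (\<lambda>x. x) = 0" unfolding G_def
    by (subst integral_density) (use nn integral_normal_moment_nz_1[OF s, of 0] in auto)
  have m2: "has_bochner_integral lborel (\<lambda>x. normal_density 0 \<sigma> x * (x * x)) (\<sigma>\<^sup>2)"
    using normal_moment_even[OF s, of 0 1] by (simp add: power2_eq_square)
  show "integrable G (\<lambda>x. x * x)" unfolding G_def
    by (subst integrable_density) (use nn integrable.intros[OF m2] in auto)
  show "integral\<^sup>L G (\<lambda>x. x * x) = \<sigma>\<^sup>2" unfolding G_def
    by (subst integral_density) (use nn m2 in \<open>auto dest: has_bochner_integral_integral_eq\<close>)
qed

lemma gauss_prob: "0 < lam \<Longrightarrow> prob_space (gauss d lam)"
  unfolding gauss_def by (intro prob_space_PiM G_facts(1)) auto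

lemma gauss_mom2:
  assumes lam: "0 < lam" and i: "i < d" and j: "j < d"
  shows "integrable (gauss d lam) (\<lambda>z. z i * z j)"
    "(\<integral>z. z i * z j \<partial>gauss d lam) = (if i = j then 1 / lam else 0)"
proof -
  define \<sigma> where "\<sigma> = 1 / sqrt lam"
  have s: "0 < \<sigma>" using lam unfolding \<sigma>_def by simp
  define G where "G = density lborel (normal_density 0 \<sigma>)"
  note GF = G_facts[OF s, folded G_def]
  interpret product_prob_space "\<lambda>_. G" "{..<d}"
    by (simp add: product_prob_space_def product_sigma_finite_def product_prob_space_axioms_def GF(1) prob_space_imp_sigma_finite)
  have gd: "gauss d lam = Pi\<^sub>M {..<d} (\<lambda>_. G)" unfolding gauss_def G_def \<sigma>_def ..
  define f where "f = (\<lambda>l (t::real). (if l = i then t else 1) * (if l = j then t else 1))"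
  have prodf: "(\<Prod>l<d. f l (z l)) = z i * z j" for z
    unfolding f_def prod.distrib using i j by simp
  interpret G: prob_space G by (rule GF(1))
  have fc: "f l = (if l = i \<and> l = j then (\<lambda>t. t * t) else if l = i \<or> l = j then (\<lambda>t. t) else (\<lambda>t. 1))" for l
    by (auto simp: f_def fun_eq_iff)
  have intf: "integrable G (f l)" for l
    unfolding fc using GF(2,4) by simp
  have intval: "integral\<^sup>L G (f l) = (if l = i \<and> l = j then \<sigma>\<^sup>2 else if l = i \<or> l = j then 0 else 1)" for l
    unfolding fc using GF(3,5) by (simp add: prob_space.prob_space[OF GF(1)])
  show "integrable (gauss d lam) (\<lambda>z. z i * z j)"
    using product_integrable_prod[of "{..<d}" f] intf unfolding gd prodf by simp
  have "(\<integral>z. z i * z j \<partial>gauss d lam) = (\<Prod>l<d. integral\<^sup>L G (f l))"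
    using product_integral_prod[of "{..<d}" f] intf unfolding gd prodf by simp
  also have "\<dots> = (if i = j then 1 / lam else 0)"
  proof (cases "i = j")
    case True
    then have "(\<Prod>l<d. integral\<^sup>L G (f l)) = (\<Prod>l<d. if l = i then \<sigma>\<^sup>2 else 1)"
      unfolding intval by (intro prod.cong) auto
    also have "\<dots> = \<sigma>\<^sup>2" using i by simp
    finally show ?thesis using True lam by (simp add: \<sigma>_def power_divide)
  next
    case False
    have "integral\<^sup>L G (f i) = 0" unfolding intval using False by simp
    then have "(\<Prod>l<d. integral\<^sup>L G (f l)) = 0" using i by (intro prod_zero) auto
    then show ?thesis using False by simp
  qed
  finally show "(\<integral>z. z i * z j \<partial>gauss d lam) = (if i = j then 1 / lam else 0)" .
qed

lemma gauss_mom1: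
  assumes lam: "0 < lam" and i: "i < d"
  shows "integrable (gauss d lam) (\<lambda>z. z i)" "(\<integral>z. z i \<partial>gauss d lam) = 0"
proof -
  define \<sigma> where "\<sigma> = 1 / sqrt lam"
  have s: "0 < \<sigma>" using lam unfolding \<sigma>_def by simp
  define G where "G = density lborel (normal_density 0 \<sigma>)"
  note GF = G_facts[OF s, folded G_def]
  interpret product_prob_space "\<lambda>_. G" "{..<d}"
    by (simp add: product_prob_space_def product_sigma_finite_def product_prob_space_axioms_def GF(1) prob_space_imp_sigma_finite)
  have gd: "gauss d lam = Pi\<^sub>M {..<d} (\<lambda>_. G)" unfolding gauss_def G_def \<sigma>_def ..
  define f where "f = (\<lambda>l (t::real). (if l = i then t else 1))"
  have prodf: "(\<Prod>l<d. f l (z l)) = z i" for z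
    unfolding f_def using i by simp
  interpret G: prob_space G by (rule GF(1))
  have fc: "f l = (if l = i then (\<lambda>t. t) else (\<lambda>t. 1))" for l
    by (auto simp: f_def fun_eq_iff)
  have intf: "integrable G (f l)" for l
    unfolding fc using GF(2) by simp
  have intval: "integral\<^sup>L G (f i) = 0"
    unfolding fc using GF(3) by simp
  show "integrable (gauss d lam) (\<lambda>z. z i)"
    using product_integrable_prod[of "{..<d}" f] intf unfolding gd prodf by simp
  have "(\<integral>z. z i \<partial>gauss d lam) = (\<Prod>l<d. integral\<^sup>L G (f l))"
    using product_integral_prod[of "{..<d}" f] intf unfolding gd prodf by simp
  also have "\<dots> = 0" using i intval by (intro prod_zero) auto
  finally show "(\<integral>z. z i \<partial>gauss d lam) = 0" .
qed



lemma dinner_add: "dinner d w (\<lambda>i. m i + z i) = dinner d w m + dinner d w z"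
  unfolding dinner_def by (simp add: distrib_left sum.distrib)

lemma dinner_comm: "dinner d z v = dinner d v z"
  unfolding dinner_def by (simp add: mult.commute)

lemma dinner_self_nonneg: "0 \<le> dinner d u u"
  unfolding dinner_def by (intro sum_nonneg) auto

lemma dnorm_sq: "(dnorm d u)\<^sup>2 = dinner d u u"
  unfolding dnorm_def using dinner_self_nonneg by simp

lemma dinner_mom:
  assumes lam: "0 < lam"
  shows "integrable (gauss d lam) (\<lambda>z. dinner d u z)"
    "(\<integral>z. dinner d u z \<partial>gauss d lam) = 0"
    "integrable (gauss d lam) (\<lambda>z. (dinner d u z)\<^sup>2)"
    "(\<integral>z. (dinner d u z)\<^sup>2 \<partial>gauss d lam) = dinner d u u / lam"
proof -
  note m1 = gauss_mom1[OF lam] and m2 = gauss_mom2[OF lam]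
  show "integrable (gauss d lam) (\<lambda>z. dinner d u z)"
    unfolding dinner_def using m1 by auto
  show "(\<integral>z. dinner d u z \<partial>gauss d lam) = 0"
    unfolding dinner_def using m1 by (simp add: integral_sum)
  have sq: "(dinner d u z)\<^sup>2 = (\<Sum>i<d. \<Sum>j<d. (u i * u j) * (z i * z j))" for z
    unfolding dinner_def power2_eq_square sum_product by (intro sum.cong refl) (simp add: algebra_simps)
  show "integrable (gauss d lam) (\<lambda>z. (dinner d u z)\<^sup>2)"
    unfolding sq by (intro Bochner_Integration.integrable_sum integrable_mult_right) (auto intro: m2)
  have "(\<integral>z. (dinner d u z)\<^sup>2 \<partial>gauss d lam) = (\<Sum>i<d. \<Sum>j<d. (u i * u j) * (if i = j then 1 / lam else 0))"
  proof -
    have i2: "integrable (gauss d lam) (\<lambda>z. (u i * u j) * (z i * z j))" if "i < d" "j < d" for i j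
      using m2(1)[OF that] by (rule integrable_mult_right)
    have "(\<integral>z. (dinner d u z)\<^sup>2 \<partial>gauss d lam) = (\<Sum>i<d. \<integral>z. (\<Sum>j<d. (u i * u j) * (z i * z j)) \<partial>gauss d lam)"
      unfolding sq by (rule Bochner_Integration.integral_sum) (intro Bochner_Integration.integrable_sum i2; simp)
    also have "\<dots> = (\<Sum>i<d. \<Sum>j<d. \<integral>z. (u i * u j) * (z i * z j) \<partial>gauss d lam)"
      by (intro sum.cong refl Bochner_Integration.integral_sum i2) auto
    also have "\<dots> = (\<Sum>i<d. \<Sum>j<d. (u i * u j) * (if i = j then 1 / lam else 0))"
      by (intro sum.cong refl) (simp add: m2(2))
    finally show ?thesis .
  qed
  also have "\<dots> = (\<Sum>i<d. u i * u i / lam)"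
    by (intro sum.cong refl) (simp add: if_distrib cong: if_cong)
  also have "\<dots> = dinner d u u / lam" unfolding dinner_def by (simp add: sum_divide_distrib)
  finally show "(\<integral>z. (dinner d u z)\<^sup>2 \<partial>gauss d lam) = dinner d u u / lam" .
qed


lemma abs_int_le:
  fixes f g :: "'a \<Rightarrow> real"
  assumes "integrable M f" "integrable M g" "\<And>z. z \<in> space M \<Longrightarrow> \<bar>f z\<bar> \<le> g z"
  shows "\<bar>integral\<^sup>L M f\<bar> \<le> integral\<^sup>L M g"
proof -
  have "\<bar>integral\<^sup>L M f\<bar> \<le> integral\<^sup>L M (\<lambda>z. \<bar>f z\<bar>)"
    using integral_norm_bound[of M f] by simp
  also have "\<dots> \<le> integral\<^sup>L M g"
    by (rule integral_mono) (use assms in auto)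
  finally show ?thesis .
qed

lemma amgm: fixes w y e :: real assumes "0 < e"
  shows "\<bar>w\<bar> * (2 * \<bar>y\<bar>) \<le> e * w\<^sup>2 + y\<^sup>2 / e"
proof -
  have "0 \<le> (e * \<bar>w\<bar> - \<bar>y\<bar>)\<^sup>2" by simp
  hence "2 * e * (\<bar>w\<bar> * \<bar>y\<bar>) \<le> e\<^sup>2 * w\<^sup>2 + y\<^sup>2"
    by (simp add: power2_eq_square algebra_simps)
  hence "\<bar>w\<bar> * (2 * \<bar>y\<bar>) \<le> (e\<^sup>2 * w\<^sup>2 + y\<^sup>2) / e" using assms
    by (simp add: field_simps)
  also have "\<dots> = e * w\<^sup>2 + y\<^sup>2 / e" using assms by (simp add: field_simps power2_eq_square)
  finally show ?thesis .
qed

lemma main_bounds: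
  assumes lam: "1 \<le> lam" and a: "a < k" and c: "c < k" and hx: "\<forall>b<k. dnorm d (x b) \<le> L0"
    and L0: "0 < L0"
  shows "\<bar>Pac d k lam x mu c a - pibar d k x mu c a\<bar> \<le> ((5 * real k + 1) / 2 * real k * L0\<^sup>2) / lam"
    and "\<bar>Qacv d k lam x mu c a v\<bar> \<le> (2 * real k * L0) * dnorm d v / lam"
proof -
  have lp: "0 < lam" using lam by simp
  have k: "0 < k" using a by simp
  define N where "N = gauss d lam"
  interpret N: prob_space N unfolding N_def by (rule gauss_prob[OF lp])
  note dm = dinner_mom[OF lp, where d=d, folded N_def]
  define s where "s b = dinner d (x b) (mu c)" for b
  define t where "t z b = dinner d (x b) z" for z b
  define F where "F z = smx k (\<lambda>b. s b + t z b) a" for z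
  define F0 where "F0 = smx k s a"
  define p where "p b = smx k s b" for b
  define K where "K = (5 * real k + 1) / 2"
  have xx: "dinner d (x b) (x b) \<le> L0\<^sup>2" if "b < k" for b
  proof -
    have "dnorm d (x b) \<le> L0" using hx that by auto
    moreover have "0 \<le> dnorm d (x b)" unfolding dnorm_def by (simp add: dinner_self_nonneg)
    ultimately have "(dnorm d (x b))\<^sup>2 \<le> L0\<^sup>2" by (simp add: power_mono)
    then show ?thesis by (simp add: dnorm_sq)
  qed
  have meas_t[measurable]: "(\<lambda>z. dinner d w z) \<in> borel_measurable N" for w
    using dm(1) by (rule borel_measurable_integrable)
  have measF[measurable]: "F \<in> borel_measurable N"
    unfolding F_def[abs_def] smx_def t_def by measurable
  have F01: "0 \<le> F z" "F z \<le> 1" for z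
    unfolding F_def using smx_props[OF k] a by auto
  have F001: "0 \<le> F0" "F0 \<le> 1" unfolding F0_def using smx_props[OF k] a by auto
  have intF: "integrable N F"
    by (rule N.integrable_const_bound[where B=1]) (use F01 in auto)
  have Feq: "softmax_Y d k x (\<lambda>i. mu c i + z i) a = F z" for z
    unfolding softmax_Y_def F_def smx_def t_def s_def dinner_add ..
  have pib: "pibar d k x mu c a = F0"
    unfolding pibar_def F0_def smx_def s_def ..
  have Pint: "Pac d k lam x mu c a = integral\<^sup>L N F"
    unfolding Pac_def Feq N_def ..
  define L where "L z = F0 * (t z a - (\<Sum>b<k. p b * t z b))" for z
  have intL: "integrable N L"
    unfolding L_def t_def using dm(1) by auto
  have intL0: "integral\<^sup>L N L = 0"
    unfolding L_def t_def using dm(1,2) by (simp add: integral_sum)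
  have intS: "integrable N (\<lambda>z. K * (\<Sum>b<k. (t z b)\<^sup>2))"
    unfolding t_def using dm(3) by auto
  have valS: "integral\<^sup>L N (\<lambda>z. K * (\<Sum>b<k. (t z b)\<^sup>2)) = K * (\<Sum>b<k. dinner d (x b) (x b) / lam)"
    unfolding t_def using dm(3,4) by (simp add: integral_sum)
  have "integral\<^sup>L N F - F0 = integral\<^sup>L N (\<lambda>z. F z - F0 - L z)"
    using intF intL intL0 by (simp add: Bochner_Integration.integral_diff N.prob_space)
  also have "\<bar>\<dots>\<bar> \<le> integral\<^sup>L N (\<lambda>z. K * (\<Sum>b<k. (t z b)\<^sup>2))"
  proof (rule abs_int_le)
    show "integrable N (\<lambda>z. F z - F0 - L z)" using intF intL by auto
    show "integrable N (\<lambda>z. K * (\<Sum>b<k. (t z b)\<^sup>2))" by (rule intS)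
    fix z
    have "\<bar>smx k (\<lambda>b. s b + t z b) a - smx k s a - smx k s a * (t z a - (\<Sum>b<k. smx k s b * t z b))\<bar>
     \<le> (5 * real k + 1) / 2 * (\<Sum>b<k. (t z b)\<^sup>2)" by (rule smx_taylor[OF k a])
    then show "\<bar>F z - F0 - L z\<bar> \<le> K * (\<Sum>b<k. (t z b)\<^sup>2)"
      unfolding F_def F0_def L_def p_def K_def .
  qed
  also have "\<dots> = K * (\<Sum>b<k. dinner d (x b) (x b) / lam)" by (rule valS)
  also have "\<dots> \<le> K * (\<Sum>b<k. L0\<^sup>2 / lam)"
    unfolding K_def using xx lp by (intro mult_left_mono sum_mono divide_right_mono) auto
  also have "\<dots> = ((5 * real k + 1) / 2 * real k * L0\<^sup>2) / lam" unfolding K_def by simp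
  finally show "\<bar>Pac d k lam x mu c a - pibar d k x mu c a\<bar> \<le> ((5 * real k + 1) / 2 * real k * L0\<^sup>2) / lam"
    unfolding Pint pib .
  define w where "w z = dinner d v z" for z
  have Qint: "Qacv d k lam x mu c a v = integral\<^sup>L N (\<lambda>z. w z * F z)"
    unfolding Qacv_def Feq N_def w_def dinner_comm[of d _ v] ..
  have intw: "integrable N w" unfolding w_def[abs_def] by (rule dm(1))
  have intw0: "integral\<^sup>L N w = 0" unfolding w_def[abs_def] by (rule dm(2))
  have intwF: "integrable N (\<lambda>z. w z * (F z - F0))"
  proof (rule Bochner_Integration.integrable_bound[OF intw])
    show "(\<lambda>z. w z * (F z - F0)) \<in> borel_measurable N" unfolding w_def by measurable
    show "AE z in N. norm (w z * (F z - F0)) \<le> norm (w z)"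
    proof (intro AE_I2)
      fix z
      have "\<bar>F z - F0\<bar> \<le> 1" using F01[of z] F001 by auto
      then show "norm (w z * (F z - F0)) \<le> norm (w z)"
        by (simp add: abs_mult mult_left_le)
    qed
  qed
  have Qeq: "Qacv d k lam x mu c a v = integral\<^sup>L N (\<lambda>z. w z * (F z - F0))"
  proof -
    have "integral\<^sup>L N (\<lambda>z. w z * (F z - F0)) = integral\<^sup>L N (\<lambda>z. w z * F z - w z * F0)"
      by (simp add: algebra_simps)
    also have "\<dots> = integral\<^sup>L N (\<lambda>z. w z * F z) - integral\<^sup>L N (\<lambda>z. w z * F0)"
    proof (rule Bochner_Integration.integral_diff)
      show "integrable N (\<lambda>z. w z * F0)" using intw by auto
      have "integrable N (\<lambda>z. w z * (F z - F0) + w z * F0)" using intwF intw by auto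
      then show "integrable N (\<lambda>z. w z * F z)" by (simp add: algebra_simps)
    qed
    also have "integral\<^sup>L N (\<lambda>z. w z * F0) = 0" using intw0 by simp
    finally show ?thesis unfolding Qint by simp
  qed
  define nv where "nv = dnorm d v"
  have nv0: "0 \<le> nv" unfolding nv_def dnorm_def by (simp add: dinner_self_nonneg)
  have nvsq: "nv\<^sup>2 = dinner d v v" unfolding nv_def by (rule dnorm_sq)
  show "\<bar>Qacv d k lam x mu c a v\<bar> \<le> (2 * real k * L0) * dnorm d v / lam"
  proof (cases "nv = 0")
    case True
    then have "dinner d v v = 0" using nvsq by simp
    then have "\<forall>i\<in>{..<d}. v i * v i = 0"
      unfolding dinner_def by (subst sum_nonneg_eq_0_iff[symmetric]) auto
    then have "w z = 0" for z unfolding w_def dinner_def by auto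
    then show ?thesis unfolding Qeq using True nv_def by simp
  next
    case False
    then have nvp: "0 < nv" using nv0 by simp
    define e where "e = L0 / nv"
    have ep: "0 < e" unfolding e_def using nvp L0 by simp
    define H where "H z = (\<Sum>b<k. e * (w z)\<^sup>2 + (t z b)\<^sup>2 / e)" for z
    have intH: "integrable N H"
      unfolding H_def[abs_def] t_def w_def using dm(3) by auto
    have valH: "integral\<^sup>L N H = (\<Sum>b<k. e * (dinner d v v / lam) + (dinner d (x b) (x b) / lam) / e)"
      unfolding H_def[abs_def] t_def w_def using dm(3,4) by (simp add: integral_sum)
    have "\<bar>integral\<^sup>L N (\<lambda>z. w z * (F z - F0))\<bar> \<le> integral\<^sup>L N H"
    proof (rule abs_int_le[OF intwF intH])
      fix z
      have "\<bar>w z * (F z - F0)\<bar> = \<bar>w z\<bar> * \<bar>F z - F0\<bar>" by (simp add: abs_mult)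
      also have "\<dots> \<le> \<bar>w z\<bar> * (2 * (\<Sum>b<k. \<bar>t z b\<bar>))"
        using smx_lip[OF k a, of s "t z"] unfolding F_def F0_def by (intro mult_left_mono) auto
      also have "\<dots> = (\<Sum>b<k. \<bar>w z\<bar> * (2 * \<bar>t z b\<bar>))" by (simp add: sum_distrib_left)
      also have "\<dots> \<le> H z" unfolding H_def by (intro sum_mono amgm ep)
      finally show "\<bar>w z * (F z - F0)\<bar> \<le> H z" .
    qed
    also have "\<dots> = (\<Sum>b<k. e * (nv\<^sup>2 / lam) + (dinner d (x b) (x b) / lam) / e)"
      unfolding valH nvsq ..
    also have "\<dots> \<le> (\<Sum>b<k. e * (nv\<^sup>2 / lam) + (L0\<^sup>2 / lam) / e)"
      using xx lp ep by (intro sum_mono add_left_mono divide_right_mono) auto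
    also have "\<dots> = real k * (2 * L0 * nv / lam)"
      unfolding e_def using nvp L0 lp by (simp add: field_simps power2_eq_square)
    finally show ?thesis unfolding Qeq nv_def by (simp add: field_simps)
  qed
qed


theorem lemma5p4:
  fixes k :: nat and L0 :: real
  assumes "L0 > 0"
  shows "\<exists>C lam0. \<forall>lam \<ge> lam0. \<forall>d::nat. \<forall>mu x :: nat \<Rightarrow> nat \<Rightarrow> real.
           (\<forall>c<k. dnorm d (mu c) = 1) \<longrightarrow> (\<forall>b<k. dnorm d (x b) \<le> L0) \<longrightarrow>
           (\<forall>a<k. \<forall>c<k. \<forall>v :: nat \<Rightarrow> real.
              \<bar>Pac d k lam x mu c a - pibar d k x mu c a\<bar> \<le> C / lam \<and>
              \<bar>Qacv d k lam x mu c a v\<bar> \<le> C * dnorm d v / lam)"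
proof -
  define C1 where "C1 = (5 * real k + 1) / 2 * real k * L0\<^sup>2"
  define C2 where "C2 = 2 * real k * L0"
  have C10: "0 \<le> C1" unfolding C1_def by simp
  have C20: "0 \<le> C2" unfolding C2_def using assms by simp
  have key: "\<bar>Pac d k lam x mu c a - pibar d k x mu c a\<bar> \<le> (C1 + C2) / lam \<and>
     \<bar>Qacv d k lam x mu c a v\<bar> \<le> (C1 + C2) * dnorm d v / lam"
    if lam: "1 \<le> lam" and hx: "\<forall>b<k. dnorm d (x b) \<le> L0" and a: "a < k" and c: "c < k"
    for lam :: real and d mu x a c v
  proof
    have lp: "0 < lam" using lam by simp
    have nv: "0 \<le> dnorm d v" unfolding dnorm_def by (simp add: dinner_self_nonneg)
    have "\<bar>Pac d k lam x mu c a - pibar d k x mu c a\<bar> \<le> C1 / lam"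
      using main_bounds(1)[OF lam a c hx assms] unfolding C1_def .
    also have "\<dots> \<le> (C1 + C2) / lam" using C20 lp by (intro divide_right_mono) auto
    finally show "\<bar>Pac d k lam x mu c a - pibar d k x mu c a\<bar> \<le> (C1 + C2) / lam" .
    have "\<bar>Qacv d k lam x mu c a v\<bar> \<le> C2 * dnorm d v / lam"
      using main_bounds(2)[OF lam a c hx assms] unfolding C2_def .
    also have "\<dots> \<le> (C1 + C2) * dnorm d v / lam"
      using C10 lp nv by (intro divide_right_mono mult_right_mono) auto
    finally show "\<bar>Qacv d k lam x mu c a v\<bar> \<le> (C1 + C2) * dnorm d v / lam" .
  qed
  show ?thesis
    by (intro exI[of _ "C1 + C2"] exI[of _ 1] allI impI) (rule key; assumption)
qed

end
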